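(* Let $G:\mathbb{R}_+\to\mathbb{R}_+$ be of the form \[ G(z)=c\,\mathbf{1}[z>0]+\gamma_0 z+\int_{(0,\infty)}(1-e^{-rz})\,\nu(dr), \] where $c,\gamma_0\ge 0$ and $\nu$ is a non-negative measure on $(0,\infty)$ with $\int_{(0,\infty)}\min\{r,1\}\,\nu(dr)<\infty$. Then there exists a deterministic function $\ell_G:(0,\infty)\times(0,1)\to\mathbb{R}_+$ satisfying: (i) (2D-monotonicity) for all $a\le a'$ and $b\le b'$ in its domain, $\ell_G(a,b)\le \ell_G(a',b')$; (ii) ($G$-transformation) for every $\lambda>0$, if $Y\sim\mathrm{Exp}(\lambda)$ and $U\sim\mathrm{Uniform}(0,1)$ are independent, then $\ell_G(Y,U)\sim\mathrm{Exp}(G(\lambda))$.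
   Context: $\mathbb{R}_+$ denotes the non-negative reals. $\mathrm{Exp}(\lambda)$ denotes the exponential distribution with rate $\lambda$ (CDF $1-e^{-\lambda x}$). $\mathbf{1}[\cdot]$ is the indicator function. *)

theory Defs
  imports "HOL-Probability.Probability"
begin

text \<open>The Bernstein-type function
  G(z) = c 1[z>0] + gamma0 z + integral over (0,oo) of (1 - exp(-r z)) nu(dr).
  The measure nu is a measure on the Borel sets of the reals carried by (0,oo).\<close>
definition G_fun :: "real \<Rightarrow> real \<Rightarrow> real measure \<Rightarrow> real \<Rightarrow> real" where
  "G_fun c \<gamma>0 \<nu> z =
     c * (if z > 0 then 1 else 0) + \<gamma>0 * z + (\<integral>r. (1 - exp (- r * z)) \<partial>\<nu>)"

definition Exp_measure :: "real \<Rightarrow> real measure" where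
  "Exp_measure l = density lborel (exponential_density l)"

definition Unif01 :: "real measure" where
  "Unif01 = uniform_measure lborel {0<..<1}"

end

theory Submission
  imports Defs
begin
lemma Exp_prob: "0 < l \<Longrightarrow> prob_space (Exp_measure l)"
  unfolding Exp_measure_def using prob_space_exponential_density .
lemma sets_Exp[simp, measurable_cong]: "sets (Exp_measure l) = sets borel"
  by (simp add: Exp_measure_def)
lemma space_Exp[simp]: "space (Exp_measure l) = UNIV"
  by (simp add: Exp_measure_def)

lemma exp_tail:
  assumes l: "0 < l" and a: "0 \<le> a"
  shows "emeasure (Exp_measure l) {a<..} = ennreal (exp (- a * l))"
proof -
  interpret P: prob_space "Exp_measure l" using Exp_prob[OF l] .
  have "emeasure (Exp_measure l) {..a} = ennreal (1 - exp (- l * a))"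
    unfolding Exp_measure_def using emeasure_erlang_density[OF l, of 0 a] a
    by (simp add: erlang_CDF_0 exponential_density_def)
  hence m0: "ennreal (P.prob {..a}) = ennreal (1 - exp (- l * a))"
    by (simp add: P.emeasure_eq_measure)
  have "exp (- l * a) \<le> 1" using l a by simp
  hence m: "P.prob {..a} = 1 - exp (- l * a)"
    using m0 by (subst (asm) ennreal_inj) auto
  have "{a<..} = space (Exp_measure l) - {..a}" by auto
  hence "P.prob {a<..} = exp (- a * l)" using P.prob_compl[of "{..a}"] m
    by (simp add: mult.commute)
  thus ?thesis by (simp add: P.emeasure_eq_measure)
qed

locale qsetup =
  fixes H :: "real \<Rightarrow> real \<Rightarrow> real" and g :: "real \<Rightarrow> real" and l0 :: real
  assumes H0: "\<And>t y. 0 \<le> H t y" and H1: "\<And>t y. H t y \<le> 1"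
  and Hy: "\<And>t y y'. y \<le> y' \<Longrightarrow> H t y \<le> H t y'"
  and Ht: "\<And>t t' y. 0 \<le> t \<Longrightarrow> t \<le> t' \<Longrightarrow> H t' y \<le> H t y"
  and Hlap: "\<And>l t. 0 < l \<Longrightarrow> 0 \<le> t \<Longrightarrow> (\<integral>\<^sup>+ y. ennreal (H t y) \<partial>Exp_measure l) = ennreal (exp (- t * g l))"
  and l0: "0 < l0" "0 < g l0"
begin

lemma H_meas[measurable]: "H t \<in> borel_measurable borel"
  by (rule borel_measurable_mono) (auto simp: mono_def Hy)

lemma H_bound:
  assumes t: "0 \<le> t" and y: "0 \<le> y"
  shows "H t y * exp (- y * l0) \<le> exp (- t * g l0)"
proof -
  have "ennreal (H t y * exp (- y * l0)) = ennreal (H t y) * emeasure (Exp_measure l0) {y<..}"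
    using exp_tail[OF l0(1) y] by (simp add: ennreal_mult H0)
  also have "\<dots> = (\<integral>\<^sup>+ z. ennreal (H t y) * indicator {y<..} z \<partial>Exp_measure l0)"
    by (simp add: nn_integral_cmult_indicator)
  also have "\<dots> \<le> (\<integral>\<^sup>+ z. ennreal (H t z) \<partial>Exp_measure l0)"
    by (intro nn_integral_mono) (auto simp: indicator_def intro!: Hy ennreal_leI)
  also have "\<dots> = ennreal (exp (- t * g l0))" using Hlap[OF l0(1) t] .
  finally show ?thesis by (subst (asm) ennreal_le_iff) auto
qed

lemma H_small:
  assumes u: "u < 1"
  shows "\<exists>T. \<forall>s\<ge>T. H s y \<le> 1 - u"
proof -
  define y' where "y' = max y 0"
  define T where "T = max 0 ((y' * l0 - ln (1 - u)) / g l0)"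
  have "H s y \<le> 1 - u" if s: "s \<ge> T" for s
  proof -
    have s0: "0 \<le> s" using s by (simp add: T_def)
    have "H s y \<le> H s y'" by (rule Hy) (simp add: y'_def)
    also have "H s y' \<le> exp (- s * g l0) / exp (- y' * l0)"
      using H_bound[OF s0, of y'] by (simp add: y'_def field_simps)
    also have "\<dots> = exp (y' * l0 - s * g l0)" by (simp add: exp_diff[symmetric] algebra_simps)
    also have "\<dots> \<le> exp (ln (1 - u))"
    proof -
      have "(y' * l0 - ln (1 - u)) / g l0 \<le> s" using s by (simp add: T_def)
      hence "y' * l0 - ln (1 - u) \<le> s * g l0" using l0 by (simp add: divide_le_eq)
      thus ?thesis by simp
    qed
    also have "\<dots> = 1 - u" using u by simp
    finally show ?thesis .
  qed
  thus ?thesis by blast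
qed

definition S where "S y u = {s. 0 \<le> s \<and> 1 - u < H s y}"
definition Lq where "Lq y u = (if u < 1 then Sup (insert 0 (S y u)) else 0)"

lemma S_bdd: assumes "u < 1" shows "bdd_above (insert 0 (S y u))"
proof -
  obtain T where T: "\<And>s. s \<ge> T \<Longrightarrow> H s y \<le> 1 - u" using H_small[OF assms] by blast
  have "x \<le> max T 0" if "x \<in> insert 0 (S y u)" for x
    using that T[of x] by (force simp: S_def)
  thus ?thesis unfolding bdd_above_def by blast
qed

lemma Lq_nonneg: "0 \<le> Lq y u"
  using S_bdd[of u y] by (auto simp: Lq_def intro: cSup_upper)

lemma Lq_mono:
  assumes "y \<le> y'" "u \<le> u'" "u' < 1"
  shows "Lq y u \<le> Lq y' u'"
proof -
  have "insert 0 (S y u) \<subseteq> insert 0 (S y' u')"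
  proof
    fix s assume "s \<in> insert 0 (S y u)"
    moreover have "1 - u < H s y \<Longrightarrow> 1 - u' < H s y'"
      using assms Hy[of y y' s] by linarith
    ultimately show "s \<in> insert 0 (S y' u')" by (auto simp: S_def)
  qed
  thus ?thesis using assms S_bdd[of u' y'] by (auto simp: Lq_def intro!: cSup_subset_mono)
qed

lemma Lq_gt:
  assumes x: "0 \<le> x"
  shows "x < Lq y u \<longleftrightarrow> u < 1 \<and> (\<exists>s>x. 1 - u < H s y)"
proof (cases "u < 1")
  case True
  have "x < Lq y u \<longleftrightarrow> (\<exists>s\<in>insert 0 (S y u). x < s)"
    using True S_bdd[OF True, of y] by (simp add: Lq_def less_cSup_iff)
  also have "\<dots> \<longleftrightarrow> (\<exists>s>x. 1 - u < H s y)" using x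
    apply (auto simp: S_def)
    subgoal for s by (rule exI[of _ s]) auto
    done
  finally show ?thesis using True by simp
qed (use x in \<open>simp add: Lq_def\<close>)

lemma Lq_gt_rat:
  assumes x: "0 \<le> x"
  shows "x < Lq y u \<longleftrightarrow> (\<exists>q\<in>\<rat> \<inter> {x<..}. u < 1 \<and> 1 - u < H q y)"
proof -
  have "(\<exists>s>x. 1 - u < H s y) \<longleftrightarrow> (\<exists>q\<in>\<rat> \<inter> {x<..}. 1 - u < H q y)"
  proof
    assume "\<exists>s>x. 1 - u < H s y"
    then obtain s where s: "s > x" "1 - u < H s y" by blast
    obtain q where q: "q \<in> \<rat>" "x < q" "q < s" using Rats_dense_in_real[OF s(1)] by blast
    have "H s y \<le> H q y" using q x by (intro Ht) auto
    thus "\<exists>q\<in>\<rat> \<inter> {x<..}. 1 - u < H q y" using q s by (intro bexI[of _ q]) auto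
  qed auto
  thus ?thesis using Lq_gt[OF x] by auto
qed

lemma Lq_meas: "(\<lambda>(y, u). Lq y u) \<in> borel_measurable (borel \<Otimes>\<^sub>M borel)"
proof (subst borel_measurable_iff_greater, intro allI)
  fix a :: real
  show "{w \<in> space (borel \<Otimes>\<^sub>M borel). a < (case w of (y, u) \<Rightarrow> Lq y u)} \<in> sets (borel \<Otimes>\<^sub>M borel)"
  proof (cases "0 \<le> a")
    case False
    hence "{w \<in> space (borel \<Otimes>\<^sub>M borel). a < (case w of (y, u) \<Rightarrow> Lq y u)} = space (borel \<Otimes>\<^sub>M borel)"
      using Lq_nonneg by (auto simp: not_le intro: less_le_trans)
    thus ?thesis by simp
  next
    case True
    have "{w \<in> space (borel \<Otimes>\<^sub>M borel). a < (case w of (y, u) \<Rightarrow> Lq y u)} =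
      (\<Union>q\<in>\<rat> \<inter> {a<..}. {w \<in> space (borel \<Otimes>\<^sub>M borel). snd w < 1 \<and> 1 - snd w < H q (fst w)})"
      using Lq_gt_rat[OF True] by auto
    also have "\<dots> \<in> sets (borel \<Otimes>\<^sub>M borel)"
      by (intro sets.countable_UN'') (auto intro: countable_Int1 countable_rat)
    finally show ?thesis .
  qed
qed


end

lemma Unif_prob: "prob_space Unif01"
  unfolding Unif01_def by (rule prob_space_uniform_measure) auto
lemma sets_Unif[simp, measurable_cong]: "sets Unif01 = sets borel"
  by (simp add: Unif01_def)
lemma space_Unif[simp]: "space Unif01 = UNIV"
  by (simp add: Unif01_def)

lemma Unif_Ioo:
  assumes "0 \<le> h" "h \<le> 1"
  shows "emeasure Unif01 {u. u < 1 \<and> 1 - u < h} = ennreal h"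
proof -
  have "{0<..<1} \<inter> {u. u < 1 \<and> 1 - u < h} = {max 0 (1 - h)<..<1::real}" by auto
  moreover have "1 - max 0 (1 - h) = h" using assms by auto
  ultimately show ?thesis using assms
    by (simp add: Unif01_def divide_ennreal_def)
qed

context qsetup begin

lemma Lq_tail:
  assumes l: "0 < l" and x: "0 \<le> x"
  shows "emeasure (Exp_measure l \<Otimes>\<^sub>M Unif01) {w. x < Lq (fst w) (snd w)} = ennreal (exp (- x * g l))"
proof -
  interpret U: prob_space Unif01 by (rule Unif_prob)
  have meas: "(\<lambda>w. Lq (fst w) (snd w)) \<in> borel_measurable (Exp_measure l \<Otimes>\<^sub>M Unif01)"
    using Lq_meas by (simp add: case_prod_beta' cong: measurable_cong_sets)
  have A: "{w. x < Lq (fst w) (snd w)} \<in> sets (Exp_measure l \<Otimes>\<^sub>M Unif01)"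
    using measurable_sets[OF meas, of "{x<..}"] by (simp add: space_pair_measure vimage_def)
  define f where "f n y = H (x + 1 / Suc n) y" for n y
  define h where "h y = (SUP n. f n y)" for y
  have f_inc: "f n y \<le> f m y" if "n \<le> m" for n m y
    unfolding f_def using x that by (intro Ht) (auto simp: field_simps)
  have f_bdd: "bdd_above (range (\<lambda>n. f n y))" for y
    using H1 unfolding f_def bdd_above_def by blast
  have h01: "0 \<le> h y" "h y \<le> 1" for y
  proof -
    show "0 \<le> h y" unfolding h_def using f_bdd[of y] H0[of "x + 1 / Suc 0" y]
      by (intro cSUP_upper2[where x=0]) (auto simp: f_def)
    show "h y \<le> 1" unfolding h_def using H1 by (intro cSUP_least) (auto simp: f_def)
  qed
  have sl: "{u. x < Lq y u} = {u. u < 1 \<and> 1 - u < h y}" for y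
  proof -
    have "(\<exists>s>x. 1 - u < H s y) \<longleftrightarrow> 1 - u < h y" for u
    proof
      assume "\<exists>s>x. 1 - u < H s y"
      then obtain s where s: "s > x" "1 - u < H s y" by blast
      obtain n where n: "1 / Suc n < s - x"
        using s(1) by (metis diff_gt_0_iff_gt nat_approx_posE)
      have "H s y \<le> f n y" unfolding f_def using n x by (intro Ht) auto
      also have "f n y \<le> h y" unfolding h_def using f_bdd by (intro cSUP_upper) auto
      finally show "1 - u < h y" using s by linarith
    next
      assume "1 - u < h y"
      then obtain n where "1 - u < f n y" unfolding h_def using f_bdd[of y] by (auto simp: less_cSUP_iff)
      thus "\<exists>s>x. 1 - u < H s y" unfolding f_def by (intro exI[of _ "x + 1 / Suc n"]) auto
    qed
    thus ?thesis using Lq_gt[OF x] by auto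
  qed
  have "emeasure (Exp_measure l \<Otimes>\<^sub>M Unif01) {w. x < Lq (fst w) (snd w)}
      = (\<integral>\<^sup>+ y. emeasure Unif01 (Pair y -` {w. x < Lq (fst w) (snd w)}) \<partial>Exp_measure l)"
    by (rule U.emeasure_pair_measure_alt[OF A])
  also have "\<dots> = (\<integral>\<^sup>+ y. ennreal (h y) \<partial>Exp_measure l)"
    by (intro nn_integral_cong) (simp add: vimage_def sl Unif_Ioo h01)
  also have "\<dots> = ennreal (exp (- x * g l))"
  proof (rule LIMSEQ_unique)
    show "(\<lambda>n. \<integral>\<^sup>+ y. ennreal (f n y) \<partial>Exp_measure l) \<longlonglongrightarrow> (\<integral>\<^sup>+ y. ennreal (h y) \<partial>Exp_measure l)"
    proof (rule nn_integral_LIMSEQ)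
      show "incseq (\<lambda>n y. ennreal (f n y))"
        by (auto simp: incseq_def le_fun_def intro!: ennreal_leI f_inc)
      show "(\<lambda>y. ennreal (f n y)) \<in> borel_measurable (Exp_measure l)" for n
        by (simp add: f_def cong: measurable_cong_sets)
      show "(\<lambda>n. ennreal (f n y)) \<longlonglongrightarrow> ennreal (h y)" for y
        unfolding h_def by (intro tendsto_ennrealI LIMSEQ_incseq_SUP f_bdd) (auto simp: incseq_def f_inc)
    qed
    have "(\<lambda>n. \<integral>\<^sup>+ y. ennreal (f n y) \<partial>Exp_measure l) = (\<lambda>n. ennreal (exp (- (x + 1 / Suc n) * g l)))"
      unfolding f_def using x by (intro ext Hlap l) auto
    also have "\<dots> \<longlonglongrightarrow> ennreal (exp (- (x + 0) * g l))"
      by (intro tendsto_ennrealI tendsto_intros LIMSEQ_Suc[OF lim_inverse_n']) 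
    finally show "(\<lambda>n. \<integral>\<^sup>+ y. ennreal (f n y) \<partial>Exp_measure l) \<longlonglongrightarrow> ennreal (exp (- x * g l))" by simp
  qed
  finally show ?thesis .
qed


end

lemma Exp_cdf: "0 < m \<Longrightarrow> cdf (Exp_measure m) x = (if 0 \<le> x then 1 - exp (- m * x) else 0)"
proof -
  assume m: "0 < m"
  interpret P: prob_space "Exp_measure m" using Exp_prob[OF m] .
  have "emeasure (Exp_measure m) {..x} = ennreal (if 0 \<le> x then 1 - exp (- m * x) else 0)"
    unfolding Exp_measure_def using emeasure_erlang_density[OF m, of 0 x]
    by (simp add: erlang_CDF_0 exponential_density_def)
  moreover have "0 \<le> (if 0 \<le> x then 1 - exp (- m * x) else 0)" using m by auto
  ultimately show ?thesis by (simp add: cdf_def P.emeasure_eq_measure)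
qed

context qsetup begin

lemma Lq_distr:
  assumes l: "0 < l" and gl: "0 < g l"
  shows "distr (Exp_measure l \<Otimes>\<^sub>M Unif01) borel (\<lambda>(y, u). Lq y u) = Exp_measure (g l)"
proof -
  interpret U: prob_space Unif01 by (rule Unif_prob)
  interpret E: prob_space "Exp_measure l" by (rule Exp_prob[OF l])
  interpret P: prob_space "Exp_measure l \<Otimes>\<^sub>M Unif01"
    by (intro prob_space_pair E.prob_space_axioms U.prob_space_axioms)
  have meas: "(\<lambda>(y, u). Lq y u) \<in> borel_measurable (Exp_measure l \<Otimes>\<^sub>M Unif01)"
    using Lq_meas by (simp cong: measurable_cong_sets)
  let ?D = "distr (Exp_measure l \<Otimes>\<^sub>M Unif01) borel (\<lambda>(y, u). Lq y u)"
  have rd1: "real_distribution ?D"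
    unfolding real_distribution_def real_distribution_axioms_def
    using P.prob_space_distr[OF meas] by simp
  have rd2: "real_distribution (Exp_measure (g l))"
    unfolding real_distribution_def real_distribution_axioms_def
    using Exp_prob[OF gl] by simp
  have "cdf ?D x = cdf (Exp_measure (g l)) x" for x
  proof (cases "0 \<le> x")
    case True
    have "cdf ?D x = P.prob ((\<lambda>(y, u). Lq y u) -` {..x} \<inter> space (Exp_measure l \<Otimes>\<^sub>M Unif01))"
      by (simp add: cdf_def measure_distr[OF meas])
    also have "(\<lambda>(y, u). Lq y u) -` {..x} \<inter> space (Exp_measure l \<Otimes>\<^sub>M Unif01)
       = space (Exp_measure l \<Otimes>\<^sub>M Unif01) - {w. x < Lq (fst w) (snd w)}"
      by (auto simp: space_pair_measure not_less)
    also have "P.prob \<dots> = 1 - P.prob {w. x < Lq (fst w) (snd w)}"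
    proof (rule P.prob_compl)
      show "{w. x < Lq (fst w) (snd w)} \<in> P.events"
        using measurable_sets[OF meas, of "{x<..}"] by (simp add: space_pair_measure vimage_def case_prod_beta')
    qed
    also have "P.prob {w. x < Lq (fst w) (snd w)} = exp (- x * g l)"
      using Lq_tail[OF l True] by (simp add: P.emeasure_eq_measure)
    finally show ?thesis using True gl by (simp add: Exp_cdf mult.commute)
  next
    case False
    have "cdf ?D x = P.prob ((\<lambda>(y, u). Lq y u) -` {..x} \<inter> space (Exp_measure l \<Otimes>\<^sub>M Unif01))"
      by (simp add: cdf_def measure_distr[OF meas])
    also have "(\<lambda>(y, u). Lq y u) -` {..x} \<inter> space (Exp_measure l \<Otimes>\<^sub>M Unif01) = {}"
      using False by (auto simp: space_pair_measure) (metis Lq_nonneg not_le order_trans)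
    finally show ?thesis using False gl by (simp add: Exp_cdf)
  qed
  thus ?thesis using cdf_unique[OF rd1 rd2] by auto
qed

lemma qmain:
  "\<exists>L :: real \<Rightarrow> real \<Rightarrow> real.
           (\<forall>a\<in>{0<..}. \<forall>b\<in>{0<..<1}. L a b \<ge> 0) \<and>
           (\<forall>a a' b b'. a \<in> {0<..} \<longrightarrow> a' \<in> {0<..} \<longrightarrow> b \<in> {0<..<1} \<longrightarrow> b' \<in> {0<..<1} \<longrightarrow>
               a \<le> a' \<longrightarrow> b \<le> b' \<longrightarrow> L a b \<le> L a' b') \<and>
           (\<forall>lam>0. g lam > 0 \<longrightarrow>
               distr (Exp_measure lam \<Otimes>\<^sub>M Unif01) borel (\<lambda>(y, u). L y u)
                 = Exp_measure (g lam))"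
  by (rule exI[of _ Lq]) (auto simp: Lq_nonneg Lq_mono Lq_distr)

end

definition poi :: "real \<Rightarrow> nat measure" where
  "poi m = density (count_space UNIV) (\<lambda>n. ennreal (m ^ n / fact n * exp (- m)))"

lemma sets_poi[simp, measurable_cong]: "sets (poi m) = sets (count_space UNIV)"
  by (simp add: poi_def)
lemma space_poi[simp]: "space (poi m) = UNIV"
  by (simp add: poi_def)

lemma poi_integral:
  assumes m: "0 \<le> m" and z: "0 \<le> z"
  shows "(\<integral>\<^sup>+ n. ennreal (z ^ n) \<partial>poi m) = ennreal (exp (- m * (1 - z)))"
proof -
  have s: "(\<lambda>n. exp (- m) * ((m * z) ^ n /\<^sub>R fact n)) sums (exp (- m) * exp (m * z))"
    by (intro sums_mult exp_converges)
  have eq: "exp (- m) * ((m * z) ^ n /\<^sub>R fact n) = m ^ n / fact n * exp (- m) * z ^ n" for n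
    by (simp add: power_mult_distrib field_simps)
  have s2: "(\<lambda>n. m ^ n / fact n * exp (- m) * z ^ n) sums (exp (- m) * exp (m * z))"
    using s unfolding eq .
  have "(\<integral>\<^sup>+ n. ennreal (z ^ n) \<partial>poi m) = (\<integral>\<^sup>+ n. ennreal (m ^ n / fact n * exp (- m)) * ennreal (z ^ n) \<partial>count_space UNIV)"
    unfolding poi_def by (subst nn_integral_density) auto
  also have "\<dots> = (\<Sum>n. ennreal (m ^ n / fact n * exp (- m) * z ^ n))"
    by (subst nn_integral_count_space_nat) (simp add: ennreal_mult'[symmetric] m z)
  also have "\<dots> = ennreal (\<Sum>n. m ^ n / fact n * exp (- m) * z ^ n)"
    using s2 m z by (intro suminf_ennreal2) (auto simp: sums_iff)
  also have "(\<Sum>n. m ^ n / fact n * exp (- m) * z ^ n) = exp (- m * (1 - z))"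
    using s2 by (simp add: sums_iff exp_add[symmetric] algebra_simps)
  finally show ?thesis .
qed

lemma poi_prob: assumes "0 \<le> m" shows "prob_space (poi m)"
proof
  have "emeasure (poi m) (space (poi m)) = (\<integral>\<^sup>+ n. ennreal (1 ^ n) \<partial>poi m)"
    using nn_integral_const[of "poi m" 1] by simp
  also have "\<dots> = 1" using poi_integral[OF assms, of 1] by simp
  finally show "emeasure (poi m) (space (poi m)) = 1" .
qed

lemma PiM_prod_integral:
  fixes M :: "'i \<Rightarrow> 'a measure"
  assumes M: "\<And>i. prob_space (M i)" and J: "finite J"
    and f: "\<And>i. i \<in> J \<Longrightarrow> f i \<in> borel_measurable (M i)"
  shows "(\<integral>\<^sup>+\<omega>. (\<Prod>i\<in>J. f i (\<omega> i)) \<partial>PiM UNIV M) = (\<Prod>i\<in>J. \<integral>\<^sup>+x. f i x \<partial>M i)"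
proof -
  interpret product_prob_space M UNIV
    by (auto simp: product_prob_space_def product_prob_space_axioms_def product_sigma_finite_def M
      prob_space_imp_sigma_finite)
  have meas: "(\<lambda>x. \<Prod>i\<in>J. f i (x i)) \<in> borel_measurable (PiM J M)"
    using f by (intro borel_measurable_prod_ennreal measurable_comp[OF measurable_component_singleton, unfolded comp_def]) auto
  have "(\<integral>\<^sup>+\<omega>. (\<Prod>i\<in>J. f i (\<omega> i)) \<partial>PiM UNIV M) = (\<integral>\<^sup>+\<omega>. (\<Prod>i\<in>J. f i (restrict \<omega> J i)) \<partial>PiM UNIV M)"
    by (intro nn_integral_cong prod.cong) auto
  also have "\<dots> = (\<integral>\<^sup>+x. (\<Prod>i\<in>J. f i (x i)) \<partial>distr (PiM UNIV M) (PiM J M) (\<lambda>x. restrict x J))"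
    using meas by (subst nn_integral_distr) (auto intro!: measurable_restrict_subset)
  also have "\<dots> = (\<integral>\<^sup>+x. (\<Prod>i\<in>J. f i (x i)) \<partial>PiM J M)"
    using J by (subst distr_PiM_restrict_finite) auto
  also have "\<dots> = (\<Prod>i\<in>J. \<integral>\<^sup>+x. f i x \<partial>M i)"
    using J f by (intro product_nn_integral_prod) auto
  finally show ?thesis .
qed

lemma exp_tail_closed:
  assumes l: "0 < l" and a: "0 \<le> a"
  shows "emeasure (Exp_measure l) {a..} = ennreal (exp (- a * l))"
proof -
  have "emeasure (Exp_measure l) {a} = 0"
    unfolding Exp_measure_def by (subst emeasure_density) (auto intro!: nn_integral_null_set)
  moreover have "{a..} = {a<..} \<union> {a}" by auto
  ultimately show ?thesis
    using exp_tail[OF l a] plus_emeasure[of "{a<..}" "Exp_measure l" "{a}"] by simp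
qed

lemma tonelli_tail:
  assumes P: "prob_space \<Omega>" and l: "0 < l"
    and Z: "Z \<in> borel_measurable \<Omega>" and Z0: "\<And>\<omega>. 0 \<le> Z \<omega>"
  shows "(\<integral>\<^sup>+ y. emeasure \<Omega> {\<omega>\<in>space \<Omega>. Z \<omega> \<le> y} \<partial>Exp_measure l) = (\<integral>\<^sup>+ \<omega>. ennreal (exp (- l * Z \<omega>)) \<partial>\<Omega>)"
proof -
  interpret O: prob_space \<Omega> by (rule P)
  interpret E: prob_space "Exp_measure l" by (rule Exp_prob[OF l])
  interpret pair_sigma_finite "Exp_measure l" \<Omega>
    by (intro pair_sigma_finite.intro prob_space_imp_sigma_finite E.prob_space_axioms O.prob_space_axioms)
  have meas: "(\<lambda>(y, \<omega>). indicator {\<omega>\<in>space \<Omega>. Z \<omega> \<le> y} \<omega> :: ennreal) \<in> borel_measurable (Exp_measure l \<Otimes>\<^sub>M \<Omega>)"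
  proof -
    have "(\<lambda>p. if Z (snd p) \<le> fst p then 1 else 0 :: ennreal) \<in> borel_measurable (Exp_measure l \<Otimes>\<^sub>M \<Omega>)"
      using Z by measurable
    then show ?thesis
      by (rule measurable_cong[THEN iffD1, rotated]) (auto simp: space_pair_measure indicator_def)
  qed
  have "(\<integral>\<^sup>+ y. emeasure \<Omega> {\<omega>\<in>space \<Omega>. Z \<omega> \<le> y} \<partial>Exp_measure l)
      = (\<integral>\<^sup>+ y. \<integral>\<^sup>+ \<omega>. indicator {\<omega>\<in>space \<Omega>. Z \<omega> \<le> y} \<omega> \<partial>\<Omega> \<partial>Exp_measure l)"
    using Z by (intro nn_integral_cong nn_integral_indicator[symmetric]) measurable
  also have "\<dots> = (\<integral>\<^sup>+ \<omega>. \<integral>\<^sup>+ y. indicator {\<omega>\<in>space \<Omega>. Z \<omega> \<le> y} \<omega> \<partial>Exp_measure l \<partial>\<Omega>)"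
    using Fubini'[of "\<lambda>y \<omega>. indicator {\<omega>\<in>space \<Omega>. Z \<omega> \<le> y} \<omega>"] meas by simp
  also have "\<dots> = (\<integral>\<^sup>+ \<omega>. emeasure (Exp_measure l) {Z \<omega>..} \<partial>\<Omega>)"
  proof (intro nn_integral_cong)
    fix \<omega> assume "\<omega> \<in> space \<Omega>"
    hence "(\<lambda>y. indicator {\<omega>\<in>space \<Omega>. Z \<omega> \<le> y} \<omega> :: ennreal) = indicator {Z \<omega>..}"
      by (auto simp: indicator_def fun_eq_iff)
    thus "(\<integral>\<^sup>+ y. indicator {\<omega>\<in>space \<Omega>. Z \<omega> \<le> y} \<omega> \<partial>Exp_measure l) = emeasure (Exp_measure l) {Z \<omega>..}"
      by simp
  qed
  also have "\<dots> = (\<integral>\<^sup>+ \<omega>. ennreal (exp (- l * Z \<omega>)) \<partial>\<Omega>)"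
    using exp_tail_closed[OF l Z0] by (simp add: mult.commute)
  finally show ?thesis .
qed


definition vfun :: "real \<Rightarrow> real \<times> real \<Rightarrow> real" where
  "vfun t p = (if fst p \<le> t then max 0 (snd p) else 0)"
definition Cf :: "real \<Rightarrow> nat \<times> (nat \<Rightarrow> real \<times> real) \<Rightarrow> real" where
  "Cf t x = (\<Sum>i<fst x. vfun t (snd x i))"

lemma vfun_meas[measurable]: "vfun t \<in> borel_measurable (borel \<Otimes>\<^sub>M borel)"
  unfolding vfun_def by measurable

lemma vfun_nonneg: "0 \<le> vfun t p" by (simp add: vfun_def)
lemma vfun_mono: "t \<le> t' \<Longrightarrow> vfun t p \<le> vfun t' p" by (simp add: vfun_def)
lemma Cf_nonneg: "0 \<le> Cf t x" by (simp add: Cf_def sum_nonneg vfun_nonneg)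
lemma Cf_mono: "t \<le> t' \<Longrightarrow> Cf t x \<le> Cf t' x" by (simp add: Cf_def sum_mono vfun_mono)

abbreviation "CS \<equiv> (count_space UNIV \<Otimes>\<^sub>M PiM UNIV (\<lambda>_::nat. borel \<Otimes>\<^sub>M borel :: (real \<times> real) measure))"

lemma Cf_meas[measurable]: "Cf t \<in> borel_measurable CS"
  unfolding Cf_def
proof (rule measurable_pair_measure_countable1)
  fix n :: nat
  show "(\<lambda>y. \<Sum>i<fst (n, y). vfun t (snd (n, y) i)) \<in> borel_measurable (PiM UNIV (\<lambda>_::nat. borel \<Otimes>\<^sub>M borel))"
    by simp measurable
qed simp

lemma cell_integral:
  assumes m: "0 \<le> m" and Q: "prob_space Q" and sQ: "sets Q = sets (borel \<Otimes>\<^sub>M borel)"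
    and psi: "(\<integral>\<^sup>+ p. ennreal (exp (- l * vfun t p)) \<partial>Q) = ennreal \<psi>" and psi0: "0 \<le> \<psi>"
  shows "(\<integral>\<^sup>+ x. ennreal (exp (- l * Cf t x)) \<partial>(poi m \<Otimes>\<^sub>M PiM UNIV (\<lambda>_::nat. Q))) = ennreal (exp (- m * (1 - \<psi>)))"
proof -
  interpret Qp: product_prob_space "\<lambda>_::nat. Q" UNIV
    by (auto simp: product_prob_space_def product_prob_space_axioms_def product_sigma_finite_def Q
      prob_space_imp_sigma_finite)
  interpret sigma_finite_measure "PiM UNIV (\<lambda>_::nat. Q)"
    by (rule prob_space_imp_sigma_finite) (rule Qp.P.prob_space_axioms)
  have vQ[measurable]: "vfun t \<in> borel_measurable Q" using sQ by (simp cong: measurable_cong_sets)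
  have sC: "sets (poi m \<Otimes>\<^sub>M PiM UNIV (\<lambda>_::nat. Q)) = sets CS"
    by (intro sets_pair_measure_cong sets_PiM_cong) (auto simp: sQ)
  have fm: "(\<lambda>x. ennreal (exp (- l * Cf t x))) \<in> borel_measurable (poi m \<Otimes>\<^sub>M PiM UNIV (\<lambda>_::nat. Q))"
    by (simp add: measurable_cong_sets[OF sC refl])
  have "(\<integral>\<^sup>+ x. ennreal (exp (- l * Cf t x)) \<partial>(poi m \<Otimes>\<^sub>M PiM UNIV (\<lambda>_::nat. Q)))
      = (\<integral>\<^sup>+ n. \<integral>\<^sup>+ xs. ennreal (exp (- l * Cf t (n, xs))) \<partial>PiM UNIV (\<lambda>_::nat. Q) \<partial>poi m)"
    by (rule Qp.nn_integral_fst[OF fm, symmetric])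
  also have "\<dots> = (\<integral>\<^sup>+ n. ennreal (\<psi> ^ n) \<partial>poi m)"
  proof (intro nn_integral_cong)
    fix n :: nat
    have "(\<integral>\<^sup>+ xs. ennreal (exp (- l * Cf t (n, xs))) \<partial>PiM UNIV (\<lambda>_::nat. Q))
       = (\<integral>\<^sup>+ xs. (\<Prod>i\<in>{..<n}. ennreal (exp (- l * vfun t (xs i)))) \<partial>PiM UNIV (\<lambda>_::nat. Q))"
      by (intro nn_integral_cong)
        (simp add: Cf_def sum_distrib_left exp_sum prod_ennreal)
    also have "\<dots> = (\<Prod>i\<in>{..<n}. \<integral>\<^sup>+ p. ennreal (exp (- l * vfun t p)) \<partial>Q)"
      by (rule PiM_prod_integral) (auto simp: Q)
    also have "\<dots> = ennreal (\<psi> ^ n)" unfolding psi by (simp add: ennreal_power psi0)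
    finally show "(\<integral>\<^sup>+ xs. ennreal (exp (- l * Cf t (n, xs))) \<partial>PiM UNIV (\<lambda>_::nat. Q)) = ennreal (\<psi> ^ n)" .
  qed
  also have "\<dots> = ennreal (exp (- m * (1 - \<psi>)))" by (rule poi_integral[OF m psi0])
  finally show ?thesis .
qed


definition clampf :: "real \<Rightarrow> real" where "clampf x = max 0 (min 1 x)"
definition Tj :: "nat \<Rightarrow> real measure" where "Tj j = uniform_measure lborel {real j<..real j + 1}"

lemma clampf_nonneg: "0 \<le> clampf x" by (simp add: clampf_def)

lemma Tj_prob: "prob_space (Tj j)"
  unfolding Tj_def by (rule prob_space_uniform_measure) auto
lemma sets_Tj[simp, measurable_cong]: "sets (Tj j) = sets borel" by (simp add: Tj_def)
lemma space_Tj[simp]: "space (Tj j) = UNIV" by (simp add: Tj_def)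

lemma Tj_le: "measure (Tj j) {..t} = clampf (t - real j)"
proof -
  have "emeasure (Tj j) {..t} = emeasure lborel ({real j<..real j + 1} \<inter> {..t})"
    by (simp add: Tj_def divide_ennreal_def)
  also have "{real j<..real j + 1} \<inter> {..t} = {real j<..max (real j) (min (real j + 1) t)}"
    by auto
  also have "emeasure lborel \<dots> = ennreal (clampf (t - real j))"
    by (simp add: clampf_def) (auto simp: max_def min_def ennreal_eq_0_iff)
  finally show ?thesis by (simp add: measure_def clampf_nonneg)
qed

lemma psi_calc:
  assumes pi: "prob_space \<pi>" and spi: "sets \<pi> = sets borel"
    and phi: "(\<integral>\<^sup>+ r. ennreal (exp (- l * max 0 r)) \<partial>\<pi>) = ennreal \<phi>" and phi0: "0 \<le> \<phi>"
  shows "(\<integral>\<^sup>+ p. ennreal (exp (- l * vfun t p)) \<partial>(Tj j \<Otimes>\<^sub>M \<pi>)) = ennreal (1 - clampf (t - real j) * (1 - \<phi>))"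
proof -
  interpret T: prob_space "Tj j" by (rule Tj_prob)
  interpret pi: prob_space \<pi> by (rule pi)
  interpret pi_sf: sigma_finite_measure \<pi> by (rule prob_space_imp_sigma_finite) (rule pi)
  have [measurable_cong]: "sets (Tj j \<Otimes>\<^sub>M \<pi>) = sets (borel \<Otimes>\<^sub>M borel)"
    by (intro sets_pair_measure_cong) (auto simp: spi)
  have fm: "(\<lambda>p. ennreal (exp (- l * vfun t p))) \<in> borel_measurable (Tj j \<Otimes>\<^sub>M \<pi>)"
    by measurable
  define a where "a = clampf (t - real j)"
  have a01: "0 \<le> a" "a \<le> 1" by (auto simp: a_def clampf_def)
  have Ta: "emeasure (Tj j) {..t} = ennreal a"
    using Tj_le[of j t] by (simp add: T.emeasure_eq_measure a_def)
  have Tb: "emeasure (Tj j) {t<..} = ennreal (1 - a)"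
  proof -
    have "{t<..} = space (Tj j) - {..t}" by auto
    hence "T.prob {t<..} = 1 - T.prob {..t}" using T.prob_compl[of "{..t}"] by simp
    thus ?thesis using Tj_le[of j t] by (simp add: T.emeasure_eq_measure a_def)
  qed
  have "(\<integral>\<^sup>+ p. ennreal (exp (- l * vfun t p)) \<partial>(Tj j \<Otimes>\<^sub>M \<pi>))
      = (\<integral>\<^sup>+ \<tau>. \<integral>\<^sup>+ r. ennreal (exp (- l * vfun t (\<tau>, r))) \<partial>\<pi> \<partial>Tj j)"
    by (rule pi.nn_integral_fst[OF fm, symmetric])
  also have "\<dots> = (\<integral>\<^sup>+ \<tau>. ennreal \<phi> * indicator {..t} \<tau> + indicator {t<..} \<tau> \<partial>Tj j)"
  proof (intro nn_integral_cong)
    fix \<tau>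
    show "(\<integral>\<^sup>+ r. ennreal (exp (- l * vfun t (\<tau>, r))) \<partial>\<pi>) = ennreal \<phi> * indicator {..t} \<tau> + indicator {t<..} \<tau>"
    proof (cases "\<tau> \<le> t")
      case True thus ?thesis using phi by (simp add: vfun_def)
    next
      case False thus ?thesis using pi.emeasure_space_1 by (simp add: vfun_def)
    qed
  qed
  also have "\<dots> = ennreal \<phi> * emeasure (Tj j) {..t} + emeasure (Tj j) {t<..}"
    by (subst nn_integral_add) (auto simp: nn_integral_cmult_indicator)
  also have "\<dots> = ennreal (\<phi> * a + (1 - a))"
    using a01 phi0 by (simp add: Ta Tb ennreal_mult ennreal_plus[symmetric])
  also have "\<phi> * a + (1 - a) = 1 - a * (1 - \<phi>)" by (simp add: algebra_simps)
  finally show ?thesis by (simp add: a_def)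
qed

definition Apiece :: "nat \<Rightarrow> real set" where
  "Apiece k = (if k = 0 then {1<..} else {1 / real (Suc k)<..1 / real k})"

lemma Apiece_pos: "r \<in> Apiece k \<Longrightarrow> 0 < r"
  by (auto simp: Apiece_def split: if_splits intro: less_trans[rotated])

lemma Apiece_lower: "r \<in> Apiece k \<Longrightarrow> 1 / real (Suc k) \<le> min r 1"
proof (cases "k = 0")
  case True thus "r \<in> Apiece k \<Longrightarrow> ?thesis" by (auto simp: Apiece_def)
next
  case False
  assume r: "r \<in> Apiece k"
  hence "1 / real (Suc k) < r" using False by (simp add: Apiece_def)
  moreover have "1 / real (Suc k) \<le> 1" by (simp add: divide_le_eq)
  ultimately show ?thesis by simp
qed

lemma Apiece_meas[measurable]: "Apiece k \<in> sets borel"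
  by (simp add: Apiece_def)

lemma Apiece_disj: "disjoint_family Apiece"
proof -
  have *: "Apiece k \<inter> Apiece k' = {}" if "k < k'" for k k'
  proof -
    have "r \<le> 1 / real k'" if "r \<in> Apiece k'" for r using that \<open>k < k'\<close> by (auto simp: Apiece_def)
    moreover have "1 / real k' \<le> 1 / real (Suc k)" using \<open>k < k'\<close> by (intro divide_left_mono) auto
    moreover have "1 / real (Suc k) < r" if "r \<in> Apiece k" for r
    proof (cases "k = 0")
      case True thus ?thesis using that by (simp add: Apiece_def)
    qed (use that in \<open>simp add: Apiece_def\<close>)
    ultimately show ?thesis by force
  qed
  show ?thesis unfolding disjoint_family_on_def
    by (metis * Int_commute linorder_neqE_nat)
qed

lemma Apiece_Union: "(\<Union>k. Apiece k) = {0<..}"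
proof
  show "(\<Union>k. Apiece k) \<subseteq> {0<..}" using Apiece_pos by auto
  show "{0<..} \<subseteq> (\<Union>k. Apiece k)"
  proof
    fix r :: real assume r: "r \<in> {0<..}"
    show "r \<in> (\<Union>k. Apiece k)"
    proof (cases "1 < r")
      case True thus ?thesis by (intro UN_I[of 0]) (auto simp: Apiece_def)
    next
      case False
      define k where "k = nat \<lfloor>1 / r\<rfloor>"
      have r0: "0 < r" using r by simp
      have "1 \<le> 1 / r" using False r0 by (simp add: le_divide_eq)
      hence k1: "1 \<le> k" unfolding k_def by linarith
      have kle: "real k \<le> 1 / r" and klt: "1 / r < real k + 1" unfolding k_def using \<open>1 \<le> 1 / r\<close> by linarith+
      have "r \<le> 1 / real k" using kle r0 k1 by (simp add: le_divide_eq mult.commute)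
      moreover have "1 / real (Suc k) < r" using klt r0 by (simp add: divide_less_eq algebra_simps)
      ultimately show ?thesis using k1 by (intro UN_I[of k]) (auto simp: Apiece_def)
    qed
  qed
qed

lemma exp_neg_le1: "0 < r \<Longrightarrow> 0 < (l::real) \<Longrightarrow> exp (- (r * l)) \<le> 1"
  by simp

lemma one_minus_exp_bound:
  fixes r l :: real
  assumes r: "0 < r" and l: "0 < l"
  shows "1 - exp (- r * l) \<le> max l 1 * min r 1"
proof -
  have a: "1 - exp (- r * l) \<le> r * l" using exp_ge_add_one_self[of "- r * l"] by simp
  have b: "1 - exp (- r * l) \<le> 1" by simp
  show ?thesis
  proof (cases "r \<le> 1")
    case True
    have "r * l \<le> r * max l 1" using r by (intro mult_left_mono) auto
    thus ?thesis using a True by (simp add: mult.commute)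
  next
    case False
    have "1 \<le> max l 1" by simp
    have "min r 1 = 1" using False by simp
    moreover have "1 - exp (- r * l) \<le> max l 1" using b \<open>1 \<le> max l 1\<close> by linarith
    ultimately show ?thesis by simp
  qed
qed

locale Bsetup =
  fixes c \<gamma>0 :: real and \<nu> :: "real measure"
  assumes c: "c \<ge> 0" and g0: "\<gamma>0 \<ge> 0" and snu: "sets \<nu> = sets borel"
    and n0: "emeasure \<nu> {..0} = 0"
    and fin: "(\<integral>\<^sup>+ r. ennreal (min r 1) \<partial>\<nu>) < \<infinity>"
begin

lemma snu'[measurable_cong]: "sets \<nu> = sets borel" by (rule snu)

lemma Apiece_fin: "emeasure \<nu> (Apiece k) < \<infinity>"
proof -
  have "ennreal (1 / real (Suc k)) * emeasure \<nu> (Apiece k) = (\<integral>\<^sup>+ r. ennreal (1 / real (Suc k)) * indicator (Apiece k) r \<partial>\<nu>)"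
    by (simp add: nn_integral_cmult_indicator)
  also have "\<dots> \<le> (\<integral>\<^sup>+ r. ennreal (min r 1) \<partial>\<nu>)"
  proof (intro nn_integral_mono)
    fix r
    show "ennreal (1 / real (Suc k)) * indicator (Apiece k) r \<le> ennreal (min r 1)"
      using Apiece_lower[of r k] by (cases "r \<in> Apiece k") (simp_all add: ennreal_leI)
  qed
  also have "\<dots> < \<infinity>" by (rule fin)
  finally show ?thesis by (cases "emeasure \<nu> (Apiece k) = 0") (auto simp: ennreal_mult_less_top)
qed

definition Mk where "Mk k = measure \<nu> (Apiece k)"

lemma Mk_eq: "emeasure \<nu> (Apiece k) = ennreal (Mk k)"
  using Apiece_fin[of k] by (simp add: Mk_def emeasure_eq_ennreal_measure)

lemma Mk_nonneg: "0 \<le> Mk k" by (simp add: Mk_def)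

definition pik where "pik k = (if 0 < Mk k then uniform_measure \<nu> (Apiece k) else return borel 1)"

lemma pik_prob: "prob_space (pik k)"
  unfolding pik_def using Mk_eq[of k]
  by (auto intro!: prob_space_uniform_measure prob_space_return)

lemma sets_pik[simp]: "sets (pik k) = sets borel"
  by (simp add: pik_def snu)

definition Phi where "Phi k l = enn2real (\<integral>\<^sup>+ r. ennreal (1 - exp (- r * l)) * indicator (Apiece k) r \<partial>\<nu>)"

lemma Phi_eq:
  assumes l: "0 < l"
  shows "(\<integral>\<^sup>+ r. ennreal (1 - exp (- r * l)) * indicator (Apiece k) r \<partial>\<nu>) = ennreal (Phi k l)"
proof -
  have "(\<integral>\<^sup>+ r. ennreal (1 - exp (- r * l)) * indicator (Apiece k) r \<partial>\<nu>) \<le> (\<integral>\<^sup>+ r. indicator (Apiece k) r \<partial>\<nu>)"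
    by (intro nn_integral_mono) (auto simp: indicator_def)
  also have "\<dots> < \<infinity>" using Apiece_fin by simp
  finally show ?thesis unfolding Phi_def by (simp add: less_top)
qed

lemma Phi_nonneg: "0 \<le> Phi k l" by (simp add: Phi_def)

lemma phi_exists:
  assumes l: "0 < l"
  shows "\<exists>\<phi>. 0 \<le> \<phi> \<and> (\<integral>\<^sup>+ r. ennreal (exp (- l * max 0 r)) \<partial>pik k) = ennreal \<phi> \<and> Mk k * (1 - \<phi>) = Phi k l"
proof (cases "0 < Mk k")
  case False
  hence M0: "Mk k = 0" using Mk_nonneg[of k] by simp
  have "(\<integral>\<^sup>+ r. ennreal (1 - exp (- r * l)) * indicator (Apiece k) r \<partial>\<nu>) \<le> (\<integral>\<^sup>+ r. indicator (Apiece k) r \<partial>\<nu>)"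
    by (intro nn_integral_mono) (auto simp: indicator_def)
  also have "\<dots> = 0" using Mk_eq[of k] M0 by simp
  finally have "Phi k l = 0" unfolding Phi_def by simp
  moreover have "(\<integral>\<^sup>+ r. ennreal (exp (- l * max 0 r)) \<partial>pik k) = ennreal (exp (- l))"
    using False by (simp add: pik_def nn_integral_return)
  ultimately show ?thesis using M0 by (intro exI[of _ "exp (- l)"]) auto
next
  case True
  define I where "I = (\<integral>\<^sup>+ r. ennreal (exp (- r * l)) * indicator (Apiece k) r \<partial>\<nu>)"
  have "I \<le> (\<integral>\<^sup>+ r. indicator (Apiece k) r \<partial>\<nu>)"
    unfolding I_def using l by (intro nn_integral_mono) (auto simp: indicator_def exp_neg_le1 dest!: Apiece_pos)
  also have "\<dots> = ennreal (Mk k)" using Mk_eq by simp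
  finally have Ile: "I \<le> ennreal (Mk k)" .
  then obtain Ir where Ir: "I = ennreal Ir" "0 \<le> Ir" "Ir \<le> Mk k"
    by (metis ennreal_cases ennreal_le_iff2 ennreal_neq_top top.extremum_uniqueI Mk_nonneg ennreal_le_iff)
  have sum: "ennreal (Phi k l) + I = ennreal (Mk k)"
  proof -
    have "ennreal (Phi k l) + I = (\<integral>\<^sup>+ r. ennreal (1 - exp (- r * l)) * indicator (Apiece k) r + ennreal (exp (- r * l)) * indicator (Apiece k) r \<partial>\<nu>)"
      unfolding I_def Phi_eq[OF l, symmetric] by (subst nn_integral_add) auto
    also have "\<dots> = (\<integral>\<^sup>+ r. indicator (Apiece k) r \<partial>\<nu>)"
      using l by (intro nn_integral_cong) (auto simp: indicator_def exp_neg_le1 ennreal_plus[symmetric] simp del: ennreal_plus dest!: Apiece_pos)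
    also have "\<dots> = ennreal (Mk k)" using Mk_eq by simp
    finally show ?thesis .
  qed
  hence PhiM: "Phi k l = Mk k - Ir" using Ir Phi_nonneg[of k l]
    by (simp add: ennreal_plus[symmetric] del: ennreal_plus)
  have "(\<integral>\<^sup>+ r. ennreal (exp (- l * max 0 r)) \<partial>pik k) = (\<integral>\<^sup>+ r. ennreal (exp (- l * max 0 r)) * indicator (Apiece k) r \<partial>\<nu>) / emeasure \<nu> (Apiece k)"
    using True by (simp add: pik_def nn_integral_uniform_measure)
  also have "(\<integral>\<^sup>+ r. ennreal (exp (- l * max 0 r)) * indicator (Apiece k) r \<partial>\<nu>) = I"
    unfolding I_def by (intro nn_integral_cong) (auto simp: indicator_def Apiece_pos mult.commute dest: Apiece_pos)
  also have "I / emeasure \<nu> (Apiece k) = ennreal (Ir / Mk k)"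
    using True Ir by (simp add: Mk_eq divide_ennreal)
  moreover have "Mk k * (1 - Ir / Mk k) = Phi k l" using True PhiM by (simp add: right_diff_distrib)
  ultimately show ?thesis using True Ir
    by (intro exI[of _ "Ir / Mk k"]) auto
qed


lemma AE_pos: "AE r in \<nu>. 0 < r"
proof (rule AE_I')
  show "{..0::real} \<in> null_sets \<nu>" using n0 by (auto simp: null_sets_def snu)
qed auto

definition PhiT where "PhiT l = (\<integral>r. (1 - exp (- r * l)) \<partial>\<nu>)"

lemma Phi_sums:
  assumes l: "0 < l"
  shows "(\<lambda>k. Phi k l) sums PhiT l" and "0 \<le> PhiT l"
proof -
  define F where "F r = ennreal (1 - exp (- r * l))" for r
  have "(\<integral>\<^sup>+ r. F r \<partial>\<nu>) = (\<integral>\<^sup>+ r. F r * indicator {0<..} r \<partial>\<nu>)"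
    by (intro nn_integral_cong_AE) (use AE_pos in \<open>auto simp: indicator_def\<close>)
  also have "\<dots> = (\<integral>\<^sup>+ r. (\<Sum>k. F r * indicator (Apiece k) r) \<partial>\<nu>)"
    by (simp add: suminf_indicator[OF Apiece_disj] Apiece_Union)
  also have "\<dots> = (\<Sum>k. \<integral>\<^sup>+ r. F r * indicator (Apiece k) r \<partial>\<nu>)"
    by (rule nn_integral_suminf) (simp add: F_def)
  also have "\<dots> = (\<Sum>k. ennreal (Phi k l))"
    using Phi_eq[OF l] by (simp add: F_def)
  finally have eq: "(\<integral>\<^sup>+ r. F r \<partial>\<nu>) = (\<Sum>k. ennreal (Phi k l))" .
  have "(\<integral>\<^sup>+ r. F r \<partial>\<nu>) \<le> (\<integral>\<^sup>+ r. ennreal (max l 1) * ennreal (min r 1) \<partial>\<nu>)"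
  proof (intro nn_integral_mono_AE)
    show "AE r in \<nu>. F r \<le> ennreal (max l 1) * ennreal (min r 1)"
      using AE_pos
    proof eventually_elim
      case (elim r)
      thus ?case using one_minus_exp_bound[OF elim l]
        by (simp add: F_def ennreal_mult[symmetric] ennreal_leI)
    qed
  qed
  also have "\<dots> = ennreal (max l 1) * (\<integral>\<^sup>+ r. ennreal (min r 1) \<partial>\<nu>)"
    by (rule nn_integral_cmult) simp
  also have "\<dots> < \<infinity>" using fin by (simp add: ennreal_mult_less_top)
  finally have finF: "(\<integral>\<^sup>+ r. F r \<partial>\<nu>) < \<infinity>" .
  have "PhiT l = enn2real (\<integral>\<^sup>+ r. F r \<partial>\<nu>)"
    unfolding PhiT_def F_def
    by (rule integral_eq_nn_integral) (use AE_pos l in \<open>auto elim!: eventually_mono\<close>)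
  hence FP: "(\<integral>\<^sup>+ r. F r \<partial>\<nu>) = ennreal (PhiT l)" using finF
    by (simp add: less_top[symmetric])
  show P0: "0 \<le> PhiT l" unfolding PhiT_def
    by (rule integral_nonneg_AE) (use AE_pos l in \<open>auto elim!: eventually_mono\<close>)
  have "(\<lambda>k. ennreal (Phi k l)) sums (\<Sum>k. ennreal (Phi k l))"
    by (rule summable_sums[OF summableI])
  hence "(\<lambda>k. ennreal (Phi k l)) sums ennreal (PhiT l)" using eq FP by simp
  thus "(\<lambda>k. Phi k l) sums PhiT l" using P0 by (simp add: Phi_nonneg)
qed

lemma G_eq: "0 < l \<Longrightarrow> G_fun c \<gamma>0 \<nu> l = c + \<gamma>0 * l + PhiT l"
  by (simp add: G_fun_def PhiT_def)

end

definition XK :: "nat \<Rightarrow> real \<Rightarrow> (nat \<times> nat \<Rightarrow> nat \<times> (nat \<Rightarrow> real \<times> real)) \<Rightarrow> real" where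
  "XK K t \<omega> = (\<Sum>p\<in>{..<K} \<times> {..<K}. Cf t (\<omega> p))"

lemma XK_meas[measurable]: "XK K t \<in> borel_measurable (PiM UNIV (\<lambda>_::nat\<times>nat. CS))"
  unfolding XK_def by measurable

lemma XK_nonneg: "0 \<le> XK K t \<omega>" by (simp add: XK_def sum_nonneg Cf_nonneg)
lemma XK_mono_t: "t \<le> t' \<Longrightarrow> XK K t \<omega> \<le> XK K t' \<omega>"
  by (simp add: XK_def sum_mono Cf_mono)
lemma XK_mono_K: "K \<le> K' \<Longrightarrow> XK K t \<omega> \<le> XK K' t \<omega>"
  unfolding XK_def by (intro sum_mono2) (auto simp: Cf_nonneg)

context Bsetup begin

definition Cell where "Cell p = poi (Mk (snd p)) \<Otimes>\<^sub>M PiM UNIV (\<lambda>_::nat. Tj (fst p) \<Otimes>\<^sub>M pik (snd p))"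
definition Om where "Om = PiM UNIV Cell"

lemma sets_Q: "sets (Tj j \<Otimes>\<^sub>M pik k) = sets (borel \<Otimes>\<^sub>M borel)"
  by (intro sets_pair_measure_cong) auto

lemma Q_prob: "prob_space (Tj j \<Otimes>\<^sub>M pik k)"
  by (intro prob_space_pair Tj_prob pik_prob)

lemma sets_Cell: "sets (Cell p) = sets CS"
  unfolding Cell_def by (intro sets_pair_measure_cong sets_PiM_cong) (auto simp: sets_Q)

lemma Cell_prob: "prob_space (Cell p)"
proof -
  interpret Qp: product_prob_space "\<lambda>_::nat. Tj (fst p) \<Otimes>\<^sub>M pik (snd p)" UNIV
    by (auto simp: product_prob_space_def product_prob_space_axioms_def product_sigma_finite_def Q_prob
      prob_space_imp_sigma_finite)
  show ?thesis unfolding Cell_def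
    by (intro prob_space_pair poi_prob Mk_nonneg Qp.P.prob_space_axioms)
qed

lemma sets_Om: "sets Om = sets (PiM UNIV (\<lambda>_::nat\<times>nat. CS))"
  unfolding Om_def by (intro sets_PiM_cong) (auto simp: sets_Cell)

lemma Om_prob: "prob_space Om"
proof -
  interpret Op: product_prob_space Cell UNIV
    by (auto simp: product_prob_space_def product_prob_space_axioms_def product_sigma_finite_def Cell_prob
      prob_space_imp_sigma_finite)
  show ?thesis unfolding Om_def by (rule Op.P.prob_space_axioms)
qed

lemma XK_meas_Om[measurable]: "XK K t \<in> borel_measurable Om"
  using XK_meas by (simp add: measurable_cong_sets[OF sets_Om refl])

lemma cell_lap:
  assumes l: "0 < l"
  shows "(\<integral>\<^sup>+ x. ennreal (exp (- l * Cf t x)) \<partial>Cell p) = ennreal (exp (- (clampf (t - real (fst p)) * Phi (snd p) l)))"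
proof -
  obtain \<phi> where phi: "0 \<le> \<phi>" "(\<integral>\<^sup>+ r. ennreal (exp (- l * max 0 r)) \<partial>pik (snd p)) = ennreal \<phi>"
    "Mk (snd p) * (1 - \<phi>) = Phi (snd p) l"
    using phi_exists[OF l] by blast
  define a where "a = clampf (t - real (fst p))"
  have a01: "0 \<le> a" "a \<le> 1" by (auto simp: a_def clampf_def)
  have psi: "(\<integral>\<^sup>+ q. ennreal (exp (- l * vfun t q)) \<partial>(Tj (fst p) \<Otimes>\<^sub>M pik (snd p))) = ennreal (1 - a * (1 - \<phi>))"
    unfolding a_def by (rule psi_calc[OF pik_prob sets_pik phi(2) phi(1)])
  have psi0: "0 \<le> 1 - a * (1 - \<phi>)"
  proof -
    have "a * (1 - \<phi>) \<le> a * 1" using a01 phi(1) by (intro mult_left_mono) auto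
    thus ?thesis using a01 by simp
  qed
  have "(\<integral>\<^sup>+ x. ennreal (exp (- l * Cf t x)) \<partial>Cell p) = ennreal (exp (- Mk (snd p) * (1 - (1 - a * (1 - \<phi>)))))"
    unfolding Cell_def by (rule cell_integral[OF Mk_nonneg Q_prob sets_Q psi psi0])
  also have "- Mk (snd p) * (1 - (1 - a * (1 - \<phi>))) = - (a * (Mk (snd p) * (1 - \<phi>)))"
    by (simp add: algebra_simps)
  also have "\<dots> = - (a * Phi (snd p) l)" using phi(3) by simp
  finally show ?thesis by (simp add: a_def)
qed

lemma Om_lap:
  assumes l: "0 < l"
  shows "(\<integral>\<^sup>+ \<omega>. ennreal (exp (- l * XK K t \<omega>)) \<partial>Om)
     = ennreal (exp (- ((\<Sum>j<K. clampf (t - real j)) * (\<Sum>k<K. Phi k l))))"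
proof -
  have "(\<integral>\<^sup>+ \<omega>. ennreal (exp (- l * XK K t \<omega>)) \<partial>Om)
      = (\<integral>\<^sup>+ \<omega>. (\<Prod>p\<in>{..<K} \<times> {..<K}. ennreal (exp (- l * Cf t (\<omega> p)))) \<partial>Om)"
    by (intro nn_integral_cong) (simp add: XK_def sum_distrib_left exp_sum prod_ennreal)
  also have "\<dots> = (\<Prod>p\<in>{..<K} \<times> {..<K}. \<integral>\<^sup>+ x. ennreal (exp (- l * Cf t x)) \<partial>Cell p)"
    unfolding Om_def
    by (rule PiM_prod_integral) (auto simp: Cell_prob measurable_cong_sets[OF sets_Cell refl])
  also have "\<dots> = (\<Prod>p\<in>{..<K} \<times> {..<K}. ennreal (exp (- (clampf (t - real (fst p)) * Phi (snd p) l))))"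
    by (intro prod.cong refl cell_lap l)
  also have "\<dots> = ennreal (exp (- (\<Sum>p\<in>{..<K} \<times> {..<K}. clampf (t - real (fst p)) * Phi (snd p) l)))"
    by (simp add: prod_ennreal exp_sum[symmetric] sum_negf)
  also have "(\<Sum>p\<in>{..<K} \<times> {..<K}. clampf (t - real (fst p)) * Phi (snd p) l) = (\<Sum>j<K. clampf (t - real j)) * (\<Sum>k<K. Phi k l)"
    by (simp add: sum_product sum.cartesian_product case_prod_beta)
  finally show ?thesis .
qed

end

lemma clamp_sum: "0 \<le> t \<Longrightarrow> (\<Sum>j<K. clampf (t - real j)) = min t (real K)"
  by (induction K) (auto simp: clampf_def min_def max_def)

context Bsetup begin

definition EK where "EK K t y = {\<omega>\<in>space Om. \<gamma>0 * t + XK K t \<omega> \<le> y}"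
definition Ev where "Ev t y = {\<omega>\<in>space Om. \<forall>K. \<gamma>0 * t + XK K t \<omega> \<le> y}"
definition HH where "HH t y = exp (- c * max 0 t) * measure Om (Ev t y)"

lemma EK_sets[measurable]: "EK K t y \<in> sets Om"
  unfolding EK_def by measurable

lemma Ev_eq: "Ev t y = (\<Inter>K. EK K t y)"
  by (auto simp: Ev_def EK_def)

lemma Ev_sets[measurable]: "Ev t y \<in> sets Om"
  unfolding Ev_eq by (intro sets.countable_INT) auto

lemma Ev_mono_y: "y \<le> y' \<Longrightarrow> Ev t y \<subseteq> Ev t y'"
  by (auto simp: Ev_def intro: order_trans)

lemma Ev_mono_t: "0 \<le> t \<Longrightarrow> t \<le> t' \<Longrightarrow> Ev t' y \<subseteq> Ev t y"
proof
  fix \<omega> assume t: "0 \<le> t" "t \<le> t'" and w: "\<omega> \<in> Ev t' y"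
  have "\<gamma>0 * t + XK K t \<omega> \<le> \<gamma>0 * t' + XK K t' \<omega>" for K
    using t g0 XK_mono_t[OF t(2), of K \<omega>] by (intro add_mono mult_left_mono) auto
  thus "\<omega> \<in> Ev t y" using w by (auto simp: Ev_def intro: order_trans)
qed

lemma EK_mono_y: "y \<le> y' \<Longrightarrow> EK K t y \<subseteq> EK K t y'"
  by (auto simp: EK_def intro: order_trans)

lemma EK_mono_K: "K \<le> K' \<Longrightarrow> EK K' t y \<subseteq> EK K t y"
proof
  fix \<omega> assume K: "K \<le> K'" and w: "\<omega> \<in> EK K' t y"
  have "XK K t \<omega> \<le> XK K' t \<omega>" by (rule XK_mono_K[OF K])
  thus "\<omega> \<in> EK K t y" using w by (auto simp: EK_def)
qed

lemma HH_nonneg: "0 \<le> HH t y" by (simp add: HH_def)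

lemma HH_le1: "HH t y \<le> 1"
proof -
  interpret O: prob_space Om by (rule Om_prob)
  have "exp (- c * max 0 t) \<le> 1" using c by simp
  moreover have "measure Om (Ev t y) \<le> 1" by simp
  ultimately show ?thesis unfolding HH_def by (intro mult_le_one) auto
qed

lemma HH_mono_y: "y \<le> y' \<Longrightarrow> HH t y \<le> HH t y'"
proof -
  interpret O: prob_space Om by (rule Om_prob)
  assume "y \<le> y'"
  hence "measure Om (Ev t y) \<le> measure Om (Ev t y')"
    by (intro O.finite_measure_mono Ev_mono_y) auto
  thus ?thesis unfolding HH_def by (intro mult_left_mono) auto
qed

lemma HH_mono_t: "0 \<le> t \<Longrightarrow> t \<le> t' \<Longrightarrow> HH t' y \<le> HH t y"
proof -
  interpret O: prob_space Om by (rule Om_prob)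
  assume t: "0 \<le> t" "t \<le> t'"
  hence "measure Om (Ev t' y) \<le> measure Om (Ev t y)"
    by (intro O.finite_measure_mono Ev_mono_t) auto
  moreover have "exp (- c * max 0 t') \<le> exp (- c * max 0 t)" using t c by (simp add: mult_left_mono)
  ultimately show ?thesis unfolding HH_def by (intro mult_mono) auto
qed


lemma HH_lap:
  assumes l: "0 < l" and t: "0 \<le> t"
  shows "(\<integral>\<^sup>+ y. ennreal (HH t y) \<partial>Exp_measure l) = ennreal (exp (- t * G_fun c \<gamma>0 \<nu> l))"
proof -
  interpret O: prob_space Om by (rule Om_prob)
  interpret E: prob_space "Exp_measure l" by (rule Exp_prob[OF l])
  define S where "S K = (\<Sum>k<K. Phi k l)" for K
  define a where "a K = l * \<gamma>0 * t + min t (real K) * S K" for K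
  have mEv: "(\<lambda>y. emeasure Om (Ev t y)) \<in> borel_measurable (Exp_measure l)"
  proof -
    have "(\<lambda>y. O.prob (Ev t y)) \<in> borel_measurable borel"
      by (rule borel_measurable_mono) (auto simp: mono_def intro!: O.finite_measure_mono Ev_mono_y)
    thus ?thesis by (simp add: O.emeasure_eq_measure cong: measurable_cong_sets)
  qed
  have mEK: "(\<lambda>y. emeasure Om (EK K t y)) \<in> borel_measurable (Exp_measure l)" for K
  proof -
    have "(\<lambda>y. O.prob (EK K t y)) \<in> borel_measurable borel"
      by (rule borel_measurable_mono) (auto simp: mono_def intro!: O.finite_measure_mono EK_mono_y)
    thus ?thesis by (simp add: O.emeasure_eq_measure cong: measurable_cong_sets)
  qed
  have "(\<integral>\<^sup>+ y. ennreal (HH t y) \<partial>Exp_measure l) = (\<integral>\<^sup>+ y. ennreal (exp (- c * t)) * emeasure Om (Ev t y) \<partial>Exp_measure l)"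
    using t by (intro nn_integral_cong) (simp add: HH_def ennreal_mult O.emeasure_eq_measure)
  also have "\<dots> = ennreal (exp (- c * t)) * (\<integral>\<^sup>+ y. emeasure Om (Ev t y) \<partial>Exp_measure l)"
    by (rule nn_integral_cmult[OF mEv])
  also have "(\<integral>\<^sup>+ y. emeasure Om (Ev t y) \<partial>Exp_measure l) = (\<integral>\<^sup>+ y. (INF K. emeasure Om (EK K t y)) \<partial>Exp_measure l)"
  proof (intro nn_integral_cong)
    fix y
    show "emeasure Om (Ev t y) = (INF K. emeasure Om (EK K t y))"
      unfolding Ev_eq
      by (rule INF_emeasure_decseq[symmetric]) (auto simp: decseq_def EK_mono_K)
  qed
  also have "\<dots> = (INF K. \<integral>\<^sup>+ y. emeasure Om (EK K t y) \<partial>Exp_measure l)"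
  proof (rule nn_integral_monotone_convergence_INF_decseq)
    show "decseq (\<lambda>K y. emeasure Om (EK K t y))"
    proof (rule decseq_SucI, rule le_funI)
      fix K y show "emeasure Om (EK (Suc K) t y) \<le> emeasure Om (EK K t y)"
        by (rule emeasure_mono[OF EK_mono_K]) auto
    qed
    show "(\<lambda>y. emeasure Om (EK K t y)) \<in> borel_measurable (Exp_measure l)" for K by (rule mEK)
    have "(\<integral>\<^sup>+ y. emeasure Om (EK 0 t y) \<partial>Exp_measure l) \<le> (\<integral>\<^sup>+ y. 1 \<partial>Exp_measure l)"
      by (intro nn_integral_mono) (simp add: O.emeasure_le_1)
    also have "\<dots> < \<infinity>" using E.emeasure_space_1 by simp
    finally show "(\<integral>\<^sup>+ y. emeasure Om (EK 0 t y) \<partial>Exp_measure l) < \<infinity>" .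
  qed
  also have "\<dots> = (INF K. ennreal (exp (- a K)))"
  proof (intro arg_cong[where f=Inf] image_cong refl)
    fix K
    have "(\<integral>\<^sup>+ y. emeasure Om (EK K t y) \<partial>Exp_measure l) = (\<integral>\<^sup>+ \<omega>. ennreal (exp (- l * (\<gamma>0 * t + XK K t \<omega>))) \<partial>Om)"
      unfolding EK_def using g0 t
      by (intro tonelli_tail Om_prob l) (auto intro!: add_nonneg_nonneg XK_nonneg)
    also have "\<dots> = (\<integral>\<^sup>+ \<omega>. ennreal (exp (- l * \<gamma>0 * t)) * ennreal (exp (- l * XK K t \<omega>)) \<partial>Om)"
      by (intro nn_integral_cong) (simp add: ennreal_mult[symmetric] exp_add[symmetric] algebra_simps)
    also have "\<dots> = ennreal (exp (- l * \<gamma>0 * t)) * (\<integral>\<^sup>+ \<omega>. ennreal (exp (- l * XK K t \<omega>)) \<partial>Om)"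
      by (rule nn_integral_cmult) measurable
    also have "\<dots> = ennreal (exp (- a K))"
      using Om_lap[OF l, of K t] clamp_sum[OF t, of K]
      by (simp add: a_def S_def ennreal_mult[symmetric] exp_add[symmetric] algebra_simps)
    finally show "(\<integral>\<^sup>+ y. emeasure Om (EK K t y) \<partial>Exp_measure l) = ennreal (exp (- a K))" .
  qed
  also have "(INF K. ennreal (exp (- a K))) = ennreal (exp (- (l * \<gamma>0 * t + t * PhiT l)))"
  proof (rule LIMSEQ_unique)
    have Sinc: "S K \<le> S K'" if "K \<le> K'" for K K'
      unfolding S_def using that by (intro sum_mono2) (auto simp: Phi_nonneg)
    have S0: "0 \<le> S K" for K unfolding S_def by (simp add: sum_nonneg Phi_nonneg)
    have "a K \<le> a K'" if "K \<le> K'" for K K'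
      unfolding a_def using that t S0 by (intro add_left_mono mult_mono Sinc) auto
    hence "decseq (\<lambda>K. ennreal (exp (- a K)))"
      by (auto simp: decseq_def intro!: ennreal_leI)
    thus "(\<lambda>K. ennreal (exp (- a K))) \<longlonglongrightarrow> (INF K. ennreal (exp (- a K)))"
      by (rule LIMSEQ_INF)
    have mt: "(\<lambda>K. min t (real K)) \<longlonglongrightarrow> t"
    proof (rule tendsto_eventually)
      show "\<forall>\<^sub>F K in sequentially. min t (real K) = t"
        unfolding eventually_sequentially
      proof (intro exI[of _ "nat \<lceil>t\<rceil>"] allI impI)
        fix n assume "nat \<lceil>t\<rceil> \<le> n"
        hence "t \<le> real n" using real_nat_ceiling_ge[of t] of_nat_mono[of "nat \<lceil>t\<rceil>" n] by linarith
        thus "min t (real n) = t" by simp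
      qed
    qed
    have St: "S \<longlonglongrightarrow> PhiT l"
      using Phi_sums(1)[OF l] unfolding sums_def S_def .
    have "a \<longlonglongrightarrow> l * \<gamma>0 * t + t * PhiT l"
      unfolding a_def by (intro tendsto_intros mt St)
    thus "(\<lambda>K. ennreal (exp (- a K))) \<longlonglongrightarrow> ennreal (exp (- (l * \<gamma>0 * t + t * PhiT l)))"
      by (intro tendsto_ennrealI tendsto_intros)
  qed
  finally have "(\<integral>\<^sup>+ y. ennreal (HH t y) \<partial>Exp_measure l) = ennreal (exp (- c * t)) * ennreal (exp (- (l * \<gamma>0 * t + t * PhiT l)))" .
  also have "\<dots> = ennreal (exp (- t * G_fun c \<gamma>0 \<nu> l))"
    using G_eq[OF l] by (simp add: ennreal_mult[symmetric] exp_add[symmetric] algebra_simps)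
  finally show ?thesis .
qed

end

theorem mainTheorem1:
  fixes c \<gamma>0 :: real and \<nu> :: "real measure"
  assumes "c \<ge> 0" and "\<gamma>0 \<ge> 0"
    and "sets \<nu> = sets borel"
    and "emeasure \<nu> {..0} = 0"
    and "(\<integral>\<^sup>+ r. ennreal (min r 1) \<partial>\<nu>) < \<infinity>"
  shows "\<exists>L :: real \<Rightarrow> real \<Rightarrow> real.
           (\<forall>a\<in>{0<..}. \<forall>b\<in>{0<..<1}. L a b \<ge> 0) \<and>
           (\<forall>a a' b b'. a \<in> {0<..} \<longrightarrow> a' \<in> {0<..} \<longrightarrow> b \<in> {0<..<1} \<longrightarrow> b' \<in> {0<..<1} \<longrightarrow>
               a \<le> a' \<longrightarrow> b \<le> b' \<longrightarrow> L a b \<le> L a' b') \<and>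
           (\<forall>lam>0. G_fun c \<gamma>0 \<nu> lam > 0 \<longrightarrow>
               distr (Exp_measure lam \<Otimes>\<^sub>M Unif01) borel (\<lambda>(y, u). L y u)
                 = Exp_measure (G_fun c \<gamma>0 \<nu> lam))"
proof -
  interpret B: Bsetup c \<gamma>0 \<nu> using assms by unfold_locales
  show ?thesis
  proof (cases "\<exists>l0>0. G_fun c \<gamma>0 \<nu> l0 > 0")
    case True
    then obtain l0 where l0: "0 < l0" "0 < G_fun c \<gamma>0 \<nu> l0" by blast
    interpret Q: qsetup B.HH "G_fun c \<gamma>0 \<nu>" l0
    proof
      show "\<And>t y. 0 \<le> B.HH t y" by (rule B.HH_nonneg)
      show "\<And>t y. B.HH t y \<le> 1" by (rule B.HH_le1)
      show "\<And>t y y'. y \<le> y' \<Longrightarrow> B.HH t y \<le> B.HH t y'" by (rule B.HH_mono_y)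
      show "\<And>t t' y. 0 \<le> t \<Longrightarrow> t \<le> t' \<Longrightarrow> B.HH t' y \<le> B.HH t y" by (rule B.HH_mono_t)
      show "\<And>l t. 0 < l \<Longrightarrow> 0 \<le> t \<Longrightarrow> (\<integral>\<^sup>+ y. ennreal (B.HH t y) \<partial>Exp_measure l) = ennreal (exp (- t * G_fun c \<gamma>0 \<nu> l))"
        by (rule B.HH_lap)
    qed (use l0 in auto)
    show ?thesis by (rule Q.qmain)
  next
    case False
    thus ?thesis by (intro exI[of _ "\<lambda>_ _. 0"]) auto
  qed
qed

end
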